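(* Let $S$ be a set of Boolean relations such that (i) every relation in $S$ is bijunctive, (ii) $S$ contains a relation which is not $\mathsf{F}$-valid, (iii) $S$ contains a relation which is not $\mathsf{T}$-valid, and (iv) $[x \neq y] \in Rep_{NC}(S)$. Then one of the following holds: (a) $Rep_{NC}(S)$ contains all bijunctive relations; (b) $S \subseteq Rep_{NC}(\{[x],[x\neq y]\})$.
   Context: $\mathbb{B} = \{\mathsf{F},\mathsf{T}\}$; $[\varphi]$ is the relation of tuples satisfying $\varphi$; $[x] = \{\mathsf{T}\}$. A relation is bijunctive if it is $[\varphi]$ for a conjunction $\varphi$ of clauses with at most 2 literals; $i$-valid if $(i,\dots,i)\in R$. For a set $S$ of relations, $Rep_{NC}(S)$ is the set of relations $[\theta]$ for $\theta$ of the form $(\exists \vec x)\bigwedge_{i<n} R_i(\vec x,\vec y)$ with $R_i\in S$ (existentially quantified finite conjunctions of atoms from $S$, without constants). *)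

theory Defs
  imports Main
begin

text \<open>A Boolean relation is given by its arity n together with a set of tuples
  (bool lists); False plays the role of F and True of T.\<close>
type_synonym brel = "nat \<times> bool list set"

definition wf_rel :: "brel \<Rightarrow> bool" where
  "wf_rel R \<longleftrightarrow> (\<forall>t\<in>snd R. length t = fst R)"

definition valid :: "bool \<Rightarrow> brel \<Rightarrow> bool" where
  "valid i R \<longleftrightarrow> replicate (fst R) i \<in> snd R"

text \<open>A literal is (variable index, polarity); a clause is a list of literals
  (satisfied if some literal holds); a formula is a list of clauses (conjunction).\<close>
type_synonym literal = "nat \<times> bool"
type_synonym clause = "literal list"

definition sat_clause :: "bool list \<Rightarrow> clause \<Rightarrow> bool" where
  "sat_clause t c \<longleftrightarrow> (\<exists>(i, b)\<in>set c. t ! i = b)"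

definition cnf_rel :: "nat \<Rightarrow> clause list \<Rightarrow> brel" where
  "cnf_rel n phi = (n, {t. length t = n \<and> (\<forall>c\<in>set phi. sat_clause t c)})"

definition bijunctive :: "brel \<Rightarrow> bool" where
  "bijunctive R \<longleftrightarrow> (\<exists>phi. (\<forall>c\<in>set phi. length c \<le> 2 \<and> (\<forall>(i, b)\<in>set c. i < fst R))
                            \<and> R = cnf_rel (fst R) phi)"

text \<open>[theta] for theta = (exists x_1..x_k). conj of atoms R(v), where free variables
  y_0..y_{m-1} are indices 0..m-1 and bound variables are indices m..m+k-1.\<close>
definition pp_rel :: "nat \<Rightarrow> nat \<Rightarrow> (brel \<times> nat list) list \<Rightarrow> brel" where
  "pp_rel m k atoms = (m, {y. length y = m \<and>
      (\<exists>x. length x = k \<and> (\<forall>(R, vs)\<in>set atoms. map (\<lambda>j. (y @ x) ! j) vs \<in> snd R))})"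

definition RepNC :: "brel set \<Rightarrow> brel set" where
  "RepNC S = {pp_rel m k atoms | m k atoms.
      \<forall>(R, vs)\<in>set atoms. R \<in> S \<and> length vs = fst R \<and> (\<forall>j\<in>set vs. j < m + k)}"

definition rel_T :: brel where "rel_T = (1, {[True]})"
definition rel_neq :: brel where "rel_neq = (2, {[False, True], [True, False]})"

end

theory Submission
  imports Defs
begin

definition holds :: "(brel \<times> nat list) list \<Rightarrow> (nat \<Rightarrow> bool) \<Rightarrow> bool" where
  "holds atoms \<sigma> \<longleftrightarrow> (\<forall>p\<in>set atoms. map \<sigma> (snd p) \<in> snd (fst p))"

definition gen :: "nat \<Rightarrow> (brel \<times> nat list) list \<Rightarrow> brel" where
  "gen m atoms = (m, {y. length y = m \<and> (\<exists>\<sigma>. (\<forall>j<m. \<sigma> j = y!j) \<and> holds atoms \<sigma>)})"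

definition over :: "brel set \<Rightarrow> (brel \<times> nat list) list \<Rightarrow> bool" where
  "over S atoms \<longleftrightarrow> (\<forall>p\<in>set atoms. fst p \<in> S \<and> length (snd p) = fst (fst p))"

lemma pp_gen:
  assumes "\<forall>(R, vs)\<in>set atoms. \<forall>j\<in>set vs. j < m + k"
  shows "pp_rel m k atoms = gen m atoms"
proof -
  have "y \<in> snd (pp_rel m k atoms) \<longleftrightarrow> y \<in> snd (gen m atoms)" for y
  proof
    assume "y \<in> snd (pp_rel m k atoms)"
    then obtain x where y: "length y = m" and x: "length x = k"
      and h: "\<forall>(R, vs)\<in>set atoms. map (\<lambda>j. (y @ x) ! j) vs \<in> snd R"
      unfolding pp_rel_def by auto
    have "holds atoms (\<lambda>j. (y @ x) ! j)"
      using h unfolding holds_def by fastforce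
    moreover have "(\<forall>j<m. (\<lambda>j. (y @ x) ! j) j = y!j)"
      using y by (auto simp: nth_append)
    ultimately have "\<exists>\<sigma>. (\<forall>j<m. \<sigma> j = y!j) \<and> holds atoms \<sigma>"
      by (intro exI[where x="\<lambda>j. (y @ x) ! j"]) simp
    then show "y \<in> snd (gen m atoms)" unfolding gen_def using y by simp
  next
    assume "y \<in> snd (gen m atoms)"
    then obtain \<sigma> where y: "length y = m" and s: "\<forall>j<m. \<sigma> j = y!j" and h: "holds atoms \<sigma>"
      unfolding gen_def by auto
    define x where "x = map \<sigma> [m..<m+k]"
    have eq: "(y @ x) ! j = \<sigma> j" if "j < m + k" for j
      using that s y by (auto simp: x_def nth_append)
    have "\<forall>(R, vs)\<in>set atoms. map (\<lambda>j. (y @ x) ! j) vs \<in> snd R"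
    proof (intro ballI, clarify)
      fix R vs assume a: "(R, vs) \<in> set atoms"
      have "map (\<lambda>j. (y @ x) ! j) vs = map \<sigma> vs"
        using assms a eq by (fastforce intro: map_cong)
      moreover have "map \<sigma> vs \<in> snd R" using h a unfolding holds_def by fastforce
      ultimately show "map (\<lambda>j. (y @ x) ! j) vs \<in> snd R" by argo
    qed
    moreover have "length x = k" by (simp add: x_def)
    ultimately show "y \<in> snd (pp_rel m k atoms)" unfolding pp_rel_def using y by auto
  qed
  then show ?thesis by (auto simp: pp_rel_def gen_def)
qed

lemma RepNC_elim:
  assumes "R \<in> RepNC S"
  shows "\<exists>atoms. over S atoms \<and> R = gen (fst R) atoms"
proof -
  obtain m k atoms where R: "R = pp_rel m k atoms"
    and a: "\<forall>(R, vs)\<in>set atoms. R \<in> S \<and> length vs = fst R \<and> (\<forall>j\<in>set vs. j < m + k)"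
    using assms unfolding RepNC_def by blast
  have "R = gen m atoms" using R pp_gen[of atoms m k] a by fastforce
  moreover have "over S atoms" using a unfolding over_def by fastforce
  moreover have "fst R = m" using R by (simp add: pp_rel_def)
  ultimately show ?thesis by auto
qed

lemma RepNC_intro:
  assumes "over S atoms"
  shows "gen m atoms \<in> RepNC S"
proof -
  define V where "V = set (concat (map snd atoms))"
  define k where "k = Suc (Max (insert 0 V))"
  have fin: "finite V" by (simp add: V_def)
  have bnd: "\<forall>(R, vs)\<in>set atoms. R \<in> S \<and> length vs = fst R \<and> (\<forall>j\<in>set vs. j < m + k)"
  proof (intro ballI, clarify, intro conjI)
    fix R vs assume a: "(R, vs) \<in> set atoms"
    show "R \<in> S" "length vs = fst R" using a assms unfolding over_def by auto
    show "\<forall>j\<in>set vs. j < m + k"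
    proof
      fix j assume "j \<in> set vs"
      then have "j \<in> V" using a unfolding V_def by force
      then have "j \<le> Max (insert 0 V)" using fin by simp
      then show "j < m + k" unfolding k_def by simp
    qed
  qed
  have "gen m atoms = pp_rel m k atoms"
    using pp_gen[of atoms m k] bnd by fastforce
  then show ?thesis unfolding RepNC_def using bnd by blast
qed


lemma holds_map:
  "holds (map (\<lambda>(R', ws). (R', map f ws)) ats) \<sigma> \<longleftrightarrow> holds ats (\<sigma> \<circ> f)"
  unfolding holds_def by (auto simp: comp_def)

lemma holds_concat:
  "holds (concat (map g xs)) \<sigma> \<longleftrightarrow> (\<forall>a\<in>set xs. holds (g a) \<sigma>)"
  unfolding holds_def by auto

lemma holds_cong:
  assumes "\<forall>p\<in>set ats. \<forall>v\<in>set (snd p). f v = g v"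
  shows "holds ats f \<longleftrightarrow> holds ats g"
proof -
  have e: "\<forall>p\<in>set ats. map f (snd p) = map g (snd p)" using assms by simp
  show ?thesis unfolding holds_def
  proof (rule ball_cong[OF refl])
    fix p assume "p \<in> set ats"
    then have eq: "map f (snd p) = map g (snd p)" using e by blast
    show "(map f (snd p) \<in> snd (fst p)) = (map g (snd p) \<in> snd (fst p))" by (simp only: eq)
  qed
qed

lemma compose:
  assumes A0: "\<forall>p\<in>set atoms. fst p \<in> RepNC S \<and> length (snd p) = fst (fst p)"
  shows "gen m atoms \<in> RepNC S"
proof -
  define rs where "rs a = fst (fst (atoms ! a))" for a
  define vsa where "vsa a = snd (atoms ! a)" for a
  have "\<forall>a. \<exists>ats. a < length atoms \<longrightarrow> over S ats \<and> fst (atoms ! a) = gen (rs a) ats"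
  proof
    fix a
    show "\<exists>ats. a < length atoms \<longrightarrow> over S ats \<and> fst (atoms ! a) = gen (rs a) ats"
    proof (cases "a < length atoms")
      case True
      then have "fst (atoms ! a) \<in> RepNC S" using A0 by simp
      from RepNC_elim[OF this] show ?thesis unfolding rs_def by blast
    qed simp
  qed
  then obtain A where A': "\<forall>a. a < length atoms \<longrightarrow> over S (A a) \<and> fst (atoms ! a) = gen (rs a) (A a)"
    using choice[of "\<lambda>a ats. a < length atoms \<longrightarrow> over S ats \<and> fst (atoms ! a) = gen (rs a) ats"] by blast
  then have A: "\<And>a. a < length atoms \<Longrightarrow> over S (A a) \<and> fst (atoms ! a) = gen (rs a) (A a)" by blast
  define V where "V = set (concat (map snd atoms))"
  define N where "N = m + Suc (Max (insert 0 V))"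
  have finV: "finite V" by (simp add: V_def)
  have VN: "v < N" if "v \<in> V" for v
  proof -
    have "v \<le> Max (insert 0 V)" using finV that by simp
    then show ?thesis unfolding N_def by simp
  qed
  have mN: "m < N" unfolding N_def by simp
  have lenv: "length (vsa a) = rs a" if "a < length atoms" for a
    using A0 that unfolding vsa_def rs_def by simp
  have vsaV: "vsa a ! j \<in> V" if "a < length atoms" "j < rs a" for a j
  proof -
    have "length (vsa a) = rs a" using lenv that by simp
    then have "vsa a ! j \<in> set (vsa a)" using that by simp
    moreover have "vsa a \<in> set (map snd atoms)" using that unfolding vsa_def by simp
    ultimately show ?thesis unfolding V_def by force
  qed
  define VA where "VA a = set (concat (map snd (A a)))" for a
  define M where "M = Suc (Max (insert 0 (\<Union>a\<in>{..<length atoms}. VA a)))"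
  have VAM: "v < M" if "a < length atoms" "v \<in> VA a" for a v
  proof -
    have "finite (\<Union>a\<in>{..<length atoms}. VA a)" by (simp add: VA_def)
    moreover have "v \<in> (\<Union>a\<in>{..<length atoms}. VA a)" using that by auto
    ultimately have "v \<le> Max (insert 0 (\<Union>a\<in>{..<length atoms}. VA a))" by simp
    then show ?thesis unfolding M_def by simp
  qed
  define ren where "ren a v = (if v < rs a then vsa a ! v else N + (a * M + v))" for a v
  define comb where "comb = concat (map (\<lambda>a. map (\<lambda>(R', ws). (R', map (ren a) ws)) (A a)) [0..<length atoms])"
  have overc: "over S comb"
    using A unfolding comb_def over_def by fastforce
  have hc: "holds comb \<sigma> \<longleftrightarrow> (\<forall>a<length atoms. holds (A a) (\<sigma> \<circ> ren a))" for \<sigma>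
    unfolding comb_def holds_concat holds_map by auto
  have ht: "holds atoms \<sigma> \<longleftrightarrow> (\<forall>a<length atoms. map \<sigma> (vsa a) \<in> snd (gen (rs a) (A a)))" for \<sigma>
  proof -
    have "holds atoms \<sigma> \<longleftrightarrow> (\<forall>a<length atoms. map \<sigma> (snd (atoms ! a)) \<in> snd (fst (atoms ! a)))"
      unfolding holds_def by (simp add: all_set_conv_all_nth)
    also have "\<dots> \<longleftrightarrow> (\<forall>a<length atoms. map \<sigma> (vsa a) \<in> snd (gen (rs a) (A a)))"
      using A unfolding vsa_def by simp
    finally show ?thesis .
  qed
  have "gen m atoms = gen m comb"
  proof -
    have "(\<exists>\<sigma>. (\<forall>j<m. \<sigma> j = y!j) \<and> holds atoms \<sigma>) \<longleftrightarrow> (\<exists>\<sigma>. (\<forall>j<m. \<sigma> j = y!j) \<and> holds comb \<sigma>)" for y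
    proof
      assume "\<exists>\<sigma>. (\<forall>j<m. \<sigma> j = y!j) \<and> holds atoms \<sigma>"
      then obtain \<sigma> where s: "\<forall>j<m. \<sigma> j = y!j" and h: "holds atoms \<sigma>" by blast
      have "\<exists>\<tau>. a < length atoms \<longrightarrow> (\<forall>j<rs a. \<tau> j = map \<sigma> (vsa a) ! j) \<and> holds (A a) \<tau>" for a
      proof (cases "a < length atoms")
        case True
        then have "map \<sigma> (vsa a) \<in> snd (gen (rs a) (A a))" using h ht by blast
        then obtain \<tau> where "(\<forall>j<rs a. \<tau> j = map \<sigma> (vsa a) ! j) \<and> holds (A a) \<tau>"
          unfolding gen_def by auto
        then show ?thesis by blast
      qed simp
      then have "\<forall>a. \<exists>\<tau>. a < length atoms \<longrightarrow> (\<forall>j<rs a. \<tau> j = map \<sigma> (vsa a) ! j) \<and> holds (A a) \<tau>"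
        by blast
      then have "\<exists>T. \<forall>a. a < length atoms \<longrightarrow> (\<forall>j<rs a. T a j = map \<sigma> (vsa a) ! j) \<and> holds (A a) (T a)"
        by (rule choice)
      then obtain T where T': "\<forall>a. a < length atoms \<longrightarrow> (\<forall>j<rs a. T a j = map \<sigma> (vsa a) ! j) \<and> holds (A a) (T a)"
        by (erule exE)
      have T: "(\<forall>j<rs a. T a j = map \<sigma> (vsa a) ! j) \<and> holds (A a) (T a)" if "a < length atoms" for a
        using T' that by simp
      define \<sigma>' where "\<sigma>' v = (if v < N then \<sigma> v else T ((v - N) div M) ((v - N) mod M))" for v
      have "holds (A a) (\<sigma>' \<circ> ren a)" if a: "a < length atoms" for a
      proof -
        have "(\<sigma>' \<circ> ren a) v = T a v" if v: "v \<in> VA a" for v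
        proof (cases "v < rs a")
          case True
          then show ?thesis using T[OF a] VN[OF vsaV[OF a True]] lenv[OF a]
            by (simp add: ren_def \<sigma>'_def)
        next
          case False
          have "v < M" using VAM[OF a v] .
          then have "(a * M + v) div M = a" "(a * M + v) mod M = v" by auto
          then show ?thesis using False by (simp add: ren_def \<sigma>'_def)
        qed
        then have "holds (A a) (\<sigma>' \<circ> ren a) \<longleftrightarrow> holds (A a) (T a)"
          by (intro holds_cong) (auto simp: VA_def)
        then show ?thesis using T[OF a] by simp
      qed
      then have "holds comb \<sigma>'" unfolding hc by simp
      moreover have "\<forall>j<m. \<sigma>' j = y!j" using s mN by (simp add: \<sigma>'_def)
      ultimately show "\<exists>\<sigma>. (\<forall>j<m. \<sigma> j = y!j) \<and> holds comb \<sigma>" by blast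
    next
      assume "\<exists>\<sigma>. (\<forall>j<m. \<sigma> j = y!j) \<and> holds comb \<sigma>"
      then obtain \<sigma> where s: "\<forall>j<m. \<sigma> j = y!j" and h: "holds comb \<sigma>" by blast
      have "holds atoms \<sigma>"
        unfolding ht
      proof (intro allI impI)
        fix a assume a: "a < length atoms"
        have "\<forall>j<rs a. (\<sigma> \<circ> ren a) j = map \<sigma> (vsa a) ! j"
          using lenv[OF a] by (simp add: ren_def)
        moreover have "holds (A a) (\<sigma> \<circ> ren a)" using h a unfolding hc by simp
        ultimately have "\<exists>\<tau>. (\<forall>j<rs a. \<tau> j = map \<sigma> (vsa a) ! j) \<and> holds (A a) \<tau>"
          by (intro exI[where x="\<sigma> \<circ> ren a"]) simp
        then show "map \<sigma> (vsa a) \<in> snd (gen (rs a) (A a))"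
          unfolding gen_def using lenv[OF a] by simp
      qed
      then show "\<exists>\<sigma>. (\<forall>j<m. \<sigma> j = y!j) \<and> holds atoms \<sigma>" using s by blast
    qed
    then show ?thesis unfolding gen_def by simp
  qed
  then show ?thesis using RepNC_intro[OF overc] by simp
qed


definition negat :: "nat \<Rightarrow> (brel \<times> nat list) list" where
  "negat n = map (\<lambda>i. (rel_neq, [i, n + i])) [0..<n]"

lemma neq_mem: "[p, q] \<in> snd rel_neq \<longleftrightarrow> p \<noteq> q"
  unfolding rel_neq_def by auto

lemma T_mem: "[p] \<in> snd rel_T \<longleftrightarrow> p"
  unfolding rel_T_def by auto

lemma holds_append: "holds (xs @ ys) \<sigma> \<longleftrightarrow> holds xs \<sigma> \<and> holds ys \<sigma>"
  unfolding holds_def by auto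

lemma holds_negat: "holds (negat n) \<sigma> \<longleftrightarrow> (\<forall>i<n. \<sigma> (n + i) = (\<not> \<sigma> i))"
  unfolding holds_def negat_def by (auto simp: neq_mem)

lemma gen_neg:
  assumes "\<And>\<sigma>. (\<forall>i<n. \<sigma> (n + i) = (\<not> \<sigma> i)) \<Longrightarrow> holds ats \<sigma> \<longleftrightarrow> \<Phi> (map \<sigma> [0..<n])"
  shows "gen n (negat n @ ats) = (n, {y. length y = n \<and> \<Phi> y})"
proof -
  have "(\<exists>\<sigma>. (\<forall>j<n. \<sigma> j = y!j) \<and> holds (negat n @ ats) \<sigma>) \<longleftrightarrow> \<Phi> y" if y: "length y = n" for y
  proof
    assume "\<exists>\<sigma>. (\<forall>j<n. \<sigma> j = y!j) \<and> holds (negat n @ ats) \<sigma>"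
    then obtain \<sigma> where s: "\<forall>j<n. \<sigma> j = y!j" and h: "holds (negat n @ ats) \<sigma>" by blast
    have neg: "\<forall>i<n. \<sigma> (n + i) = (\<not> \<sigma> i)" using h by (simp add: holds_append holds_negat)
    have "map \<sigma> [0..<n] = y" using s y by (intro nth_equalityI) auto
    then show "\<Phi> y" using assms[OF neg] h by (simp add: holds_append)
  next
    assume "\<Phi> y"
    define \<sigma> where "\<sigma> v = (if v < n then y ! v else \<not> y ! (v - n))" for v
    have neg: "\<forall>i<n. \<sigma> (n + i) = (\<not> \<sigma> i)" by (simp add: \<sigma>_def)
    have "map \<sigma> [0..<n] = y" using y by (intro nth_equalityI) (auto simp: \<sigma>_def)
    then have "holds (negat n @ ats) \<sigma>" using assms[OF neg] \<open>\<Phi> y\<close> neg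
      by (simp add: holds_append holds_negat)
    moreover have "\<forall>j<n. \<sigma> j = y!j" by (simp add: \<sigma>_def)
    ultimately show "\<exists>\<sigma>. (\<forall>j<n. \<sigma> j = y!j) \<and> holds (negat n @ ats) \<sigma>" by blast
  qed
  then show ?thesis unfolding gen_def by auto
qed

definition proj :: "brel \<Rightarrow> nat \<Rightarrow> nat \<Rightarrow> (bool \<times> bool) set" where
  "proj R i j = {(t ! i, t ! j) | t. t \<in> snd R}"

lemma bij_sat:
  assumes "bijunctive R"
  obtains phi where "\<forall>c\<in>set phi. length c \<le> 2 \<and> (\<forall>(i, b)\<in>set c. i < fst R)"
    "\<And>t. t \<in> snd R \<longleftrightarrow> length t = fst R \<and> (\<forall>c\<in>set phi. sat_clause t c)"
proof -
  obtain phi where p: "\<forall>c\<in>set phi. length c \<le> 2 \<and> (\<forall>(i, b)\<in>set c. i < fst R)"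
    and R: "R = cnf_rel (fst R) phi" using assms unfolding bijunctive_def by blast
  have "t \<in> snd R \<longleftrightarrow> length t = fst R \<and> (\<forall>c\<in>set phi. sat_clause t c)" for t
    by (subst R) (simp add: cnf_rel_def)
  with p that show ?thesis by blast
qed

lemma BP:
  assumes wf: "wf_rel R" and bj: "bijunctive R" and ne: "snd R \<noteq> {}"
  shows "t \<in> snd R \<longleftrightarrow> length t = fst R \<and> (\<forall>i<fst R. \<forall>j<fst R. (t!i, t!j) \<in> proj R i j)"
proof
  assume "t \<in> snd R"
  then show "length t = fst R \<and> (\<forall>i<fst R. \<forall>j<fst R. (t!i, t!j) \<in> proj R i j)"
    using wf unfolding wf_rel_def proj_def by blast
next
  assume A: "length t = fst R \<and> (\<forall>i<fst R. \<forall>j<fst R. (t!i, t!j) \<in> proj R i j)"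
  obtain phi where p: "\<forall>c\<in>set phi. length c \<le> 2 \<and> (\<forall>(i, b)\<in>set c. i < fst R)"
    and mem: "\<And>t. t \<in> snd R \<longleftrightarrow> length t = fst R \<and> (\<forall>c\<in>set phi. sat_clause t c)"
    using bij_sat[OF bj] by metis
  obtain s0 where s0: "s0 \<in> snd R" using ne by blast
  have "sat_clause t c" if c: "c \<in> set phi" for c
  proof -
    have sat: "sat_clause s c" if "s \<in> snd R" for s using mem that c by blast
    have len: "length c \<le> 2" and bd: "\<forall>(i, b)\<in>set c. i < fst R" using p c by auto
    have pr: "\<exists>s\<in>snd R. s!i = t!i \<and> s!j = t!j" if "i < fst R" "j < fst R" for i j
      using A that unfolding proj_def by blast
    show ?thesis
    proof (cases c)
      case Nil
      then show ?thesis using sat[OF s0] by (simp add: sat_clause_def)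
    next
      case (Cons l1 r)
      obtain i1 b1 where l1: "l1 = (i1, b1)" by (cases l1)
      have i1: "i1 < fst R" using bd Cons l1 by auto
      show ?thesis
      proof (cases r)
        case Nil
        obtain s where s: "s \<in> snd R" "s!i1 = t!i1" using pr[OF i1 i1] by blast
        show ?thesis using sat[OF s(1)] s(2) Cons Nil l1 by (simp add: sat_clause_def)
      next
        case (Cons l2 r2)
        obtain i2 b2 where l2: "l2 = (i2, b2)" by (cases l2)
        have r2: "r2 = []" using len \<open>c = l1 # r\<close> Cons by auto
        have i2: "i2 < fst R" using bd \<open>c = l1 # r\<close> Cons l2 by auto
        obtain s where s: "s \<in> snd R" "s!i1 = t!i1" "s!i2 = t!i2" using pr[OF i1 i2] by blast
        show ?thesis using sat[OF s(1)] s(2,3) \<open>c = l1 # r\<close> Cons l1 l2 r2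
          by (auto simp: sat_clause_def)
      qed
    qed
  qed
  then show "t \<in> snd R" using mem A by blast
qed


definition lit :: "nat \<Rightarrow> nat \<Rightarrow> bool \<Rightarrow> nat" where
  "lit n i c = (if c then i else n + i)"

definition exat :: "nat \<Rightarrow> nat \<Rightarrow> nat \<Rightarrow> bool \<times> bool \<Rightarrow> bool \<times> bool \<Rightarrow> (brel \<times> nat list) list" where
  "exat n i j e e' = (if fst e = fst e' then [(rel_T, [lit n i (\<not> fst e)])]
     else if snd e = snd e' then [(rel_T, [lit n j (\<not> snd e)])]
     else [(rel_neq, [lit n i (fst e), lit n j (snd e)])])"

definition allp :: "(bool \<times> bool) list" where
  "allp = [(False, False), (False, True), (True, False), (True, True)]"

definition pairat :: "nat \<Rightarrow> (bool \<times> bool) set \<Rightarrow> nat \<Rightarrow> nat \<Rightarrow> (brel \<times> nat list) list" where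
  "pairat n X i j = concat (map (\<lambda>e. concat (map (\<lambda>e'. if e = e' then [] else exat n i j e e')
       (filter (\<lambda>e. e \<notin> X) allp))) (filter (\<lambda>e. e \<notin> X) allp))"

lemma set_allp: "set allp = UNIV"
proof -
  have "x \<in> set allp" for x :: "bool \<times> bool" by (cases x) (auto simp: allp_def)
  then show ?thesis by auto
qed

lemma lit_val:
  assumes "\<forall>i<n. \<sigma> (n + i) = (\<not> \<sigma> i)" "i < n"
  shows "\<sigma> (lit n i c) = (\<sigma> i = c)"
  using assms by (auto simp: lit_def)

lemma exat_sem:
  assumes neg: "\<forall>i<n. \<sigma> (n + i) = (\<not> \<sigma> i)" and ij: "i < n" "j < n" and ne: "e \<noteq> e'"
  shows "holds (exat n i j e e') \<sigma> \<longleftrightarrow> (\<sigma> i, \<sigma> j) \<notin> {e, e'}"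
proof -
  obtain a b where e: "e = (a, b)" by (cases e)
  obtain c d where e': "e' = (c, d)" by (cases e')
  show ?thesis
    using ne lit_val[OF neg ij(1)] lit_val[OF neg ij(2)]
    by (cases a; cases b; cases c; cases d)
       (auto simp: exat_def e e' holds_def neq_mem T_mem)
qed

lemma card3:
  fixes X :: "(bool \<times> bool) set"
  assumes "card X \<noteq> 3" "p \<notin> X"
  shows "\<exists>e'. e' \<notin> X \<and> e' \<noteq> p"
proof (rule ccontr)
  assume "\<not> ?thesis"
  then have X: "X = - {p}" using assms(2) by auto
  obtain a b where p: "p = (a, b)" by (cases p)
  have "card (UNIV :: (bool \<times> bool) set) = 4"
    unfolding set_allp[symmetric] by (simp add: allp_def)
  moreover have "- {p} = UNIV - {p}" by auto
  ultimately have "card (- {p}) = 3" by (simp add: card_Diff_singleton)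
  then show False using X assms(1) by simp
qed

lemma pairat_sem:
  assumes neg: "\<forall>i<n. \<sigma> (n + i) = (\<not> \<sigma> i)" and ij: "i < n" "j < n" and c: "card X \<noteq> 3"
  shows "holds (pairat n X i j) \<sigma> \<longleftrightarrow> (\<sigma> i, \<sigma> j) \<in> X"
proof -
  have "holds (pairat n X i j) \<sigma> \<longleftrightarrow> (\<forall>e. e \<notin> X \<longrightarrow> (\<forall>e'. e' \<notin> X \<longrightarrow> e \<noteq> e' \<longrightarrow> holds (exat n i j e e') \<sigma>))"
  proof -
    have hi: "holds (if b then [] else xs) \<sigma> \<longleftrightarrow> (b \<or> holds xs \<sigma>)" for b xs
      by (simp add: holds_def)
    show ?thesis unfolding pairat_def holds_concat hi set_filter set_allp by blast
  qed
  also have "\<dots> \<longleftrightarrow> (\<forall>e. e \<notin> X \<longrightarrow> (\<forall>e'. e' \<notin> X \<longrightarrow> e \<noteq> e' \<longrightarrow> (\<sigma> i, \<sigma> j) \<notin> {e, e'}))"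
    using exat_sem[OF neg ij] by auto
  also have "\<dots> \<longleftrightarrow> (\<sigma> i, \<sigma> j) \<in> X"
    using card3[OF c] by blast
  finally show ?thesis .
qed

lemma caseB:
  assumes wf: "wf_rel R" and bj: "bijunctive R"
    and c3: "\<forall>i<fst R. \<forall>j<fst R. card (proj R i j) \<noteq> 3"
  shows "R \<in> RepNC {rel_T, rel_neq}"
proof (cases "snd R = {}")
  case True
  have "gen (fst R) [(rel_neq, [0, 0])] = (fst R, {})"
    unfolding gen_def holds_def by (auto simp: neq_mem)
  moreover have "over {rel_T, rel_neq} [(rel_neq, [0, 0])]"
    unfolding over_def by (simp add: rel_neq_def)
  ultimately show ?thesis using RepNC_intro True by (metis prod.collapse)
next
  case False
  define n where "n = fst R"
  define ats where "ats = concat (map (\<lambda>i. concat (map (\<lambda>j. pairat n (proj R i j) i j) [0..<n])) [0..<n])"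
  have "gen n (negat n @ ats) = (n, {y. length y = n \<and> (\<forall>i<n. \<forall>j<n. (y!i, y!j) \<in> proj R i j)})"
  proof (rule gen_neg)
    fix \<sigma> assume neg: "\<forall>i<n. \<sigma> (n + i) = (\<not> \<sigma> i)"
    have "holds ats \<sigma> \<longleftrightarrow> (\<forall>i<n. \<forall>j<n. holds (pairat n (proj R i j) i j) \<sigma>)"
      unfolding ats_def holds_concat by auto
    also have "\<dots> \<longleftrightarrow> (\<forall>i<n. \<forall>j<n. (\<sigma> i, \<sigma> j) \<in> proj R i j)"
      using pairat_sem[OF neg] c3 unfolding n_def by auto
    finally show "holds ats \<sigma> \<longleftrightarrow> (\<forall>i<n. \<forall>j<n. (map \<sigma> [0..<n] ! i, map \<sigma> [0..<n] ! j) \<in> proj R i j)"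
      by simp
  qed
  also have "\<dots> = R"
  proof -
    have "{y. length y = n \<and> (\<forall>i<n. \<forall>j<n. (y!i, y!j) \<in> proj R i j)} = snd R"
      using BP[OF wf bj False] unfolding n_def by blast
    then show ?thesis unfolding n_def by simp
  qed
  finally have eq: "gen n (negat n @ ats) = R" .
  have "over {rel_T, rel_neq} (negat n @ ats)"
  proof -
    have "over {rel_T, rel_neq} (negat n)" unfolding over_def negat_def by (auto simp: rel_neq_def)
    moreover have "over {rel_T, rel_neq} (exat n i j e e')" for i j e e'
      unfolding over_def exat_def by (auto simp: rel_neq_def rel_T_def)
    then have "over {rel_T, rel_neq} ats"
      unfolding ats_def pairat_def over_def by fastforce
    ultimately show ?thesis unfolding over_def by auto
  qed
  then show ?thesis using RepNC_intro eq by metis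
qed


definition vv :: "nat \<Rightarrow> nat \<Rightarrow> bool \<Rightarrow> bool \<Rightarrow> nat" where
  "vv n i b e = (if e = b then n + i else i)"

fun cla :: "brel \<Rightarrow> bool \<Rightarrow> bool \<Rightarrow> nat \<Rightarrow> clause \<Rightarrow> (brel \<times> nat list) list" where
  "cla B a b0 n [] = [(rel_neq, [0, 0])]"
| "cla B a b0 n [(i, b)] = [(B, [vv n i b a, vv n i b b0])]"
| "cla B a b0 n [(i, b), (j, c)] = [(B, [vv n i b a, vv n j c b0])]"
| "cla B a b0 n (x # y # z # w) = []"

lemma vv_val:
  assumes "\<forall>i<n. \<sigma> (n + i) = (\<not> \<sigma> i)" "i < n"
  shows "\<sigma> (vv n i b e) = (e = (\<sigma> i \<noteq> b))"
  using assms by (cases e; cases b; cases "\<sigma> i") (auto simp: vv_def)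

lemma cla_sem:
  assumes neg: "\<forall>i<n. \<sigma> (n + i) = (\<not> \<sigma> i)"
    and B: "\<And>p q. [p, q] \<in> snd B \<longleftrightarrow> (p, q) \<noteq> (a, b0)"
    and c: "length c \<le> 2" "\<forall>(i, b)\<in>set c. i < n"
  shows "holds (cla B a b0 n c) \<sigma> \<longleftrightarrow> sat_clause (map \<sigma> [0..<n]) c"
proof (cases c)
  case Nil
  then show ?thesis by (simp add: holds_def neq_mem sat_clause_def)
next
  case (Cons l1 r)
  obtain i b where l1: "l1 = (i, b)" by (cases l1)
  have i: "i < n" using c Cons l1 by auto
  show ?thesis
  proof (cases r)
    case Nil
    show ?thesis using Cons Nil l1 i vv_val[OF neg i, of b] B
      by (cases a; cases b0; cases b; cases "\<sigma> i") (auto simp: holds_def sat_clause_def)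
  next
    case (Cons l2 r2)
    obtain j d where l2: "l2 = (j, d)" by (cases l2)
    have r2: "r2 = []" using c \<open>c = l1 # r\<close> Cons by auto
    have j: "j < n" using c \<open>c = l1 # r\<close> Cons l2 by auto
    show ?thesis using \<open>c = l1 # r\<close> Cons l1 l2 r2 i j vv_val[OF neg i, of b] vv_val[OF neg j, of d] B
      by (cases a; cases b0; cases b; cases d; cases "\<sigma> i"; cases "\<sigma> j")
         (auto simp: holds_def sat_clause_def)
  qed
qed

lemma cla_set:
  "p \<in> set (cla B a b0 n c) \<Longrightarrow> (fst p = rel_neq \<or> fst p = B) \<and> length (snd p) = 2"
  by (induction B a b0 n c rule: cla.induct) auto

lemma caseA:
  assumes wf: "wf_rel R" and RS: "R \<in> S" and ij: "i < fst R" "j < fst R"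
    and c3: "card (proj R i j) = 3" and neq: "rel_neq \<in> RepNC S"
  shows "\<forall>Q. wf_rel Q \<and> bijunctive Q \<longrightarrow> Q \<in> RepNC S"
proof -
  define n where "n = fst R"
  have fin: "finite (X :: (bool \<times> bool) set)" for X
    by (rule finite_subset[of _ "set allp"]) (auto simp: set_allp)
  have "i \<noteq> j"
  proof
    assume "i = j"
    then have "proj R i j \<subseteq> {(False, False), (True, True)}" unfolding proj_def by auto
    then have "card (proj R i j) \<le> 2"
      by (metis card_2_iff card_mono finite.emptyI finite.insertI prod.inject)
    then show False using c3 by simp
  qed
  have c4: "card (UNIV :: (bool \<times> bool) set) = 4"
    unfolding set_allp[symmetric] by (simp add: allp_def)
  have "proj R i j \<noteq> UNIV" using c3 c4 by auto
  then obtain e where e: "e \<notin> proj R i j" by blast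
  have uniq: "e' = e" if "e' \<notin> proj R i j" for e'
  proof (rule ccontr)
    assume "e' \<noteq> e"
    then have "proj R i j \<subseteq> UNIV - {e, e'}" using e that by auto
    then have "card (proj R i j) \<le> card (UNIV - {e, e'})" using fin by (intro card_mono) auto
    also have "\<dots> = 2" using c4 \<open>e' \<noteq> e\<close> by (simp add: card_Diff_subset)
    finally show False using c3 by simp
  qed
  obtain a b0 where ab: "e = (a, b0)" by (cases e)
  have pj: "(p, q) \<in> proj R i j \<longleftrightarrow> (p, q) \<noteq> (a, b0)" for p q
    using e uniq ab by blast
  define B :: brel where "B = (2, {[p, q] | p q. (p, q) \<noteq> (a, b0)})"
  have Bmem: "[p, q] \<in> snd B \<longleftrightarrow> (p, q) \<noteq> (a, b0)" for p q by (auto simp: B_def)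
  define vs where "vs = map (\<lambda>p. if p = i then 0 else if p = j then 1 else p + 2) [0..<n]"
  have "gen 2 [(R, vs)] = B"
  proof -
    have "(\<exists>\<sigma>. (\<forall>k<2. \<sigma> k = y!k) \<and> holds [(R, vs)] \<sigma>) \<longleftrightarrow> (\<exists>p q. y = [p, q] \<and> (p, q) \<noteq> (a, b0))"
      if y: "length y = 2" for y
    proof
      assume "\<exists>\<sigma>. (\<forall>k<2. \<sigma> k = y!k) \<and> holds [(R, vs)] \<sigma>"
      then obtain \<sigma> where s: "\<forall>k<2. \<sigma> k = y!k" and h: "map \<sigma> vs \<in> snd R"
        by (auto simp: holds_def)
      have "map \<sigma> vs ! i = \<sigma> 0" "map \<sigma> vs ! j = \<sigma> 1"
        using ij \<open>i \<noteq> j\<close> by (auto simp: vs_def n_def)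
      then have "(\<sigma> 0, \<sigma> 1) \<in> proj R i j" using h unfolding proj_def by force
      moreover have "y = [\<sigma> 0, \<sigma> 1]" using s y by (intro nth_equalityI) (auto simp: less_2_cases_iff)
      ultimately show "\<exists>p q. y = [p, q] \<and> (p, q) \<noteq> (a, b0)" using pj by blast
    next
      assume "\<exists>p q. y = [p, q] \<and> (p, q) \<noteq> (a, b0)"
      then obtain p q where y: "y = [p, q]" and pq: "(p, q) \<noteq> (a, b0)" by blast
      then have "(p, q) \<in> proj R i j" using pj by blast
      then obtain t where t: "t \<in> snd R" "t ! i = p" "t ! j = q" unfolding proj_def by blast
      have lt: "length t = n" using wf t(1) unfolding wf_rel_def n_def by blast
      define \<sigma> where "\<sigma> v = (if v = 0 then p else if v = 1 then q else t ! (v - 2))" for v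
      have "map \<sigma> vs = t" using lt t by (intro nth_equalityI) (auto simp: vs_def \<sigma>_def)
      then have "holds [(R, vs)] \<sigma>" using t by (simp add: holds_def)
      moreover have "\<forall>k<2. \<sigma> k = y!k" by (auto simp: \<sigma>_def y less_2_cases_iff)
      ultimately show "\<exists>\<sigma>. (\<forall>k<2. \<sigma> k = y!k) \<and> holds [(R, vs)] \<sigma>" by blast
    qed
    then show ?thesis unfolding gen_def B_def by auto
  qed
  moreover have "over S [(R, vs)]" using RS by (simp add: over_def vs_def n_def)
  ultimately have BR: "B \<in> RepNC S" using RepNC_intro by metis
  show ?thesis
  proof (intro allI impI)
    fix Q assume "wf_rel Q \<and> bijunctive Q"
    then have bQ: "bijunctive Q" by blast
    obtain phi where p: "\<forall>c\<in>set phi. length c \<le> 2 \<and> (\<forall>(i, b)\<in>set c. i < fst Q)"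
      and mem: "\<And>t. t \<in> snd Q \<longleftrightarrow> length t = fst Q \<and> (\<forall>c\<in>set phi. sat_clause t c)"
      using bij_sat[OF bQ] by metis
    define nq where "nq = fst Q"
    define ats where "ats = concat (map (cla B a b0 nq) phi)"
    have "gen nq (negat nq @ ats) = (nq, {y. length y = nq \<and> (\<forall>c\<in>set phi. sat_clause y c)})"
    proof (rule gen_neg)
      fix \<sigma> assume neg: "\<forall>i<nq. \<sigma> (nq + i) = (\<not> \<sigma> i)"
      show "holds ats \<sigma> \<longleftrightarrow> (\<forall>c\<in>set phi. sat_clause (map \<sigma> [0..<nq]) c)"
        unfolding ats_def holds_concat using cla_sem[OF neg Bmem] p unfolding nq_def by blast
    qed
    also have "\<dots> = Q"
    proof -
      have "{y. length y = nq \<and> (\<forall>c\<in>set phi. sat_clause y c)} = snd Q"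
        using mem unfolding nq_def by blast
      then show ?thesis unfolding nq_def by simp
    qed
    finally have eq: "gen nq (negat nq @ ats) = Q" .
    have fB: "fst B = 2" by (simp add: B_def)
    have fN: "fst rel_neq = 2" by (simp add: rel_neq_def)
    have "\<forall>p\<in>set (negat nq @ ats). fst p \<in> RepNC S \<and> length (snd p) = fst (fst p)"
    proof -
      have "\<forall>p\<in>set (negat nq). fst p \<in> RepNC S \<and> length (snd p) = fst (fst p)"
        using neq fN by (auto simp: negat_def)
      moreover have "\<forall>p\<in>set (cla B a b0 nq c). fst p \<in> RepNC S \<and> length (snd p) = fst (fst p)" for c
        using neq BR fB fN cla_set by metis
      then have "\<forall>p\<in>set ats. fst p \<in> RepNC S \<and> length (snd p) = fst (fst p)"
        unfolding ats_def by auto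
      ultimately show ?thesis by auto
    qed
    then show "Q \<in> RepNC S" using compose eq by metis
  qed
qed

theorem mainTheorem12:
  fixes S :: "brel set"
  assumes wf: "\<forall>R\<in>S. wf_rel R"
    and bij: "\<forall>R\<in>S. bijunctive R"
    and notF: "\<exists>R\<in>S. \<not> valid False R"
    and notT: "\<exists>R\<in>S. \<not> valid True R"
    and neq: "rel_neq \<in> RepNC S"
  shows "(\<forall>R. wf_rel R \<and> bijunctive R \<longrightarrow> R \<in> RepNC S)
         \<or> S \<subseteq> RepNC {rel_T, rel_neq}"
proof (cases "\<exists>R\<in>S. \<exists>i<fst R. \<exists>j<fst R. card (proj R i j) = 3")
  case True
  then obtain R i j where "R \<in> S" "i < fst R" "j < fst R" "card (proj R i j) = 3" by blast
  then show ?thesis using caseA[of R S i j] wf neq by blast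
next
  case False
  then have "S \<subseteq> RepNC {rel_T, rel_neq}" using caseB wf bij by blast
  then show ?thesis by blast
qed

end
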